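(* Assume $K$ is a field and $\tau_{(i)}\neq0$, $\eta_{(i)}\neq-1_K$ for all $i\in\Omega$. Then the following are equivalent: (1) for any $C,D\in\mathcal{I}(\overline{\mathbf{P}})$, $|C|=|D|$ implies $\pi(\Omega,C)=\pi(\Omega,D)$; (2) for any $C,D\in\mathcal{I}(\overline{\mathbf{P}})$, $\pi(\Omega,C)=\pi(\Omega,D)$ if and only if $|C|=|D|$; (3) $\mathbf{P}$ is hierarchical, and for any $u,v\in\Omega$ with $\mathrm{len}(u)=\mathrm{len}(v)$ we have $\eta_{(u)}=\eta_{(v)}$.
   Context: $\Omega$ is a finite set and $\mathbf{P}=(\Omega,\preccurlyeq_{\mathbf{P}})$ a poset; $\overline{\mathbf{P}}$ is its dual poset, and $\mathcal{I}(\overline{\mathbf{P}})$ is the set of ideals of $\overline{\mathbf{P}}$ (up-closed subsets of $\mathbf{P}$). For $Y\subseteq\Omega$: $\max(Y)$ is the set of maximal elements of $Y$ w.r.t. $\preccurlyeq_{\mathbf{P}}$ and $\mathcal{I}(Y)$ is the set of down-closed subsets of $Y$ with the induced order. $\tau,\eta\in K^{\Omega}$. For $D,I\subseteq\Omega$, $\varphi(D,I)=(-1)^{|I\cap D|}\big(\prod_{i\in I-\max(I)}\tau_{(i)}\big)\big(\prod_{i\in\max(I)-D}\eta_{(i)}\big)$ if $I\cap D\subseteq\max(I)$, and $0$ otherwise; for $D\subseteq Y\subseteq\Omega$, $\pi(Y,D)=\sum_{I\in\mathcal{I}(Y)}\varphi(D,I)x^{|I|}\in K[x]$. $\mathrm{len}(y)$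 is the largest cardinality of a chain in $\mathbf{P}$ with greatest element $y$; $\mathbf{P}$ is hierarchical if $\mathrm{len}(u)+1\leqslant\mathrm{len}(v)$ implies $u\preccurlyeq_{\mathbf{P}}v$. *)

theory Defs
  imports "HOL-Computational_Algebra.Polynomial"
begin

definition poset_on :: "'a set \<Rightarrow> ('a \<Rightarrow> 'a \<Rightarrow> bool) \<Rightarrow> bool" where
  "poset_on \<Omega> le \<longleftrightarrow>
     (\<forall>a\<in>\<Omega>. le a a) \<and>
     (\<forall>a\<in>\<Omega>. \<forall>b\<in>\<Omega>. le a b \<and> le b a \<longrightarrow> a = b) \<and>
     (\<forall>a\<in>\<Omega>. \<forall>b\<in>\<Omega>. \<forall>c\<in>\<Omega>. le a b \<and> le b c \<longrightarrow> le a c)"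

definition down_sets :: "('a \<Rightarrow> 'a \<Rightarrow> bool) \<Rightarrow> 'a set \<Rightarrow> 'a set set" where
  "down_sets le Y = {I. I \<subseteq> Y \<and> (\<forall>a\<in>I. \<forall>b\<in>Y. le b a \<longrightarrow> b \<in> I)}"

text \<open>Ideals of the dual poset: up-closed subsets of Omega.\<close>
definition up_sets :: "('a \<Rightarrow> 'a \<Rightarrow> bool) \<Rightarrow> 'a set \<Rightarrow> 'a set set" where
  "up_sets le \<Omega> = {C. C \<subseteq> \<Omega> \<and> (\<forall>a\<in>C. \<forall>b\<in>\<Omega>. le a b \<longrightarrow> b \<in> C)}"

definition maxs :: "('a \<Rightarrow> 'a \<Rightarrow> bool) \<Rightarrow> 'a set \<Rightarrow> 'a set" where
  "maxs le Y = {y\<in>Y. \<forall>z\<in>Y. le y z \<longrightarrow> z = y}"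

definition phi :: "('a \<Rightarrow> 'a \<Rightarrow> bool) \<Rightarrow> ('a \<Rightarrow> 'k::field) \<Rightarrow> ('a \<Rightarrow> 'k) \<Rightarrow> 'a set \<Rightarrow> 'a set \<Rightarrow> 'k" where
  "phi le \<tau> \<eta> D I =
     (if I \<inter> D \<subseteq> maxs le I
      then (-1) ^ card (I \<inter> D) * (\<Prod>i\<in>I - maxs le I. \<tau> i) * (\<Prod>i\<in>maxs le I - D. \<eta> i)
      else 0)"

definition pi_poly :: "('a \<Rightarrow> 'a \<Rightarrow> bool) \<Rightarrow> ('a \<Rightarrow> 'k::field) \<Rightarrow> ('a \<Rightarrow> 'k) \<Rightarrow> 'a set \<Rightarrow> 'a set \<Rightarrow> 'k poly" where
  "pi_poly le \<tau> \<eta> Y D = (\<Sum>I\<in>down_sets le Y. monom (phi le \<tau> \<eta> D I) (card I))"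

definition chain_on :: "('a \<Rightarrow> 'a \<Rightarrow> bool) \<Rightarrow> 'a set \<Rightarrow> bool" where
  "chain_on le C \<longleftrightarrow> (\<forall>a\<in>C. \<forall>b\<in>C. le a b \<or> le b a)"

definition len :: "'a set \<Rightarrow> ('a \<Rightarrow> 'a \<Rightarrow> bool) \<Rightarrow> 'a \<Rightarrow> nat" where
  "len \<Omega> le y = Max {card C | C. C \<subseteq> \<Omega> \<and> chain_on le C \<and> y \<in> C \<and> (\<forall>c\<in>C. le c y)}"

definition hierarchical :: "'a set \<Rightarrow> ('a \<Rightarrow> 'a \<Rightarrow> bool) \<Rightarrow> bool" where
  "hierarchical \<Omega> le \<longleftrightarrow>
     (\<forall>u\<in>\<Omega>. \<forall>v\<in>\<Omega>. len \<Omega> le u + 1 \<le> len \<Omega> le v \<longrightarrow> le u v)"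

end

theory Submission
  imports Defs
begin


lemma po_refl: "poset_on \<Omega> le \<Longrightarrow> a \<in> \<Omega> \<Longrightarrow> le a a"
  unfolding poset_on_def by blast
lemma po_antisym: "poset_on \<Omega> le \<Longrightarrow> a \<in> \<Omega> \<Longrightarrow> b \<in> \<Omega> \<Longrightarrow> le a b \<Longrightarrow> le b a \<Longrightarrow> a = b"
  unfolding poset_on_def by blast
lemma po_trans: "poset_on \<Omega> le \<Longrightarrow> a \<in> \<Omega> \<Longrightarrow> b \<in> \<Omega> \<Longrightarrow> c \<in> \<Omega> \<Longrightarrow> le a b \<Longrightarrow> le b c \<Longrightarrow> le a c"
  unfolding poset_on_def by blast

lemma finite_down_sets: "finite Y \<Longrightarrow> finite (down_sets le Y)"
  unfolding down_sets_def by (rule finite_subset[of _ "Pow Y"]) auto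

lemma coeff_pi:
  assumes "finite Y"
  shows "coeff (pi_poly le \<tau> \<eta> Y D) k = (\<Sum>I\<in>{I\<in>down_sets le Y. card I = k}. phi le \<tau> \<eta> D I)"
proof -
  have fin: "finite (down_sets le Y)" using assms by (rule finite_down_sets)
  show ?thesis unfolding pi_poly_def
    by (simp add: coeff_sum coeff_monom sum.inter_filter[OF fin] eq_commute)
qed

lemma maxs_dn:
  assumes po: "poset_on \<Omega> le" and u: "u \<in> \<Omega>"
  shows "maxs le {y\<in>\<Omega>. le y u} = {u}"
  unfolding maxs_def using po_refl[OF po u] po_antisym[OF po _ u] u by auto

lemma phi_gen_in:
  assumes m: "maxs le X = {u}" and A: "X \<inter> A = {u}"
  shows "phi le \<tau> \<eta> A X = - prod \<tau> (X - {u})"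
proof -
  have "{u} - A = {}" using A by blast
  then show ?thesis unfolding phi_def m A by simp
qed

lemma phi_gen_out:
  assumes m: "maxs le X = {u}" and A: "X \<inter> A = {}" and uA: "u \<notin> A"
  shows "phi le \<tau> \<eta> A X = prod \<tau> (X - {u}) * \<eta> u"
proof -
  have "{u} - A = {u}" using uA by blast
  then show ?thesis unfolding phi_def m A by simp
qed

lemma phi_dn_in:
  assumes po: "poset_on \<Omega> le" and u: "u \<in> \<Omega>" and A: "A \<inter> {y\<in>\<Omega>. le y u} = {u}"
  shows "phi le \<tau> \<eta> A {y\<in>\<Omega>. le y u} = - prod \<tau> ({y\<in>\<Omega>. le y u} - {u})"
  by (rule phi_gen_in[OF maxs_dn[OF po u]]) (use A in blast)

lemma phi_dn_out:
  assumes po: "poset_on \<Omega> le" and u: "u \<in> \<Omega>" and A: "A \<inter> {y\<in>\<Omega>. le y u} = {}"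
  shows "phi le \<tau> \<eta> A {y\<in>\<Omega>. le y u} = prod \<tau> ({y\<in>\<Omega>. le y u} - {u}) * \<eta> u"
  by (rule phi_gen_out[OF maxs_dn[OF po u]]) (use A u po_refl[OF po u] in blast)+

lemma dn_down: "poset_on \<Omega> le \<Longrightarrow> u \<in> \<Omega> \<Longrightarrow> {y\<in>\<Omega>. le y u} \<in> down_sets le \<Omega>"
  unfolding down_sets_def poset_on_def by (smt (verit) mem_Collect_eq subsetI)

lemma dn_sub: "I \<in> down_sets le \<Omega> \<Longrightarrow> u \<in> I \<Longrightarrow> {y\<in>\<Omega>. le y u} \<subseteq> I"
  unfolding down_sets_def by auto


lemma one_plus_ne: "(x::'k::field) \<noteq> -1 \<Longrightarrow> 1 + x \<noteq> 0"
  by (metis add.commute add_eq_0_iff)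

lemma incomp_key:
  assumes fin: "finite \<Omega>" and po: "poset_on \<Omega> le"
    and tau: "\<forall>i\<in>\<Omega>. \<tau> i \<noteq> 0" and eta: "\<forall>i\<in>\<Omega>. \<eta> i \<noteq> -1"
    and P1: "\<forall>C\<in>up_sets le \<Omega>. \<forall>D\<in>up_sets le \<Omega>. card C = card D \<longrightarrow> pi_poly le \<tau> \<eta> \<Omega> C = pi_poly le \<tau> \<eta> \<Omega> D"
    and u: "u \<in> \<Omega>" and v: "v \<in> \<Omega>" and nuv: "\<not> le u v" and nvu: "\<not> le v u"
    and cle: "card {y\<in>\<Omega>. le y u} \<le> card {y\<in>\<Omega>. le y v}"
  shows "card {y\<in>\<Omega>. le y u} = card {y\<in>\<Omega>. le y v} \<and>
    (1 + \<eta> u) * prod \<tau> ({y\<in>\<Omega>. le y u} - {u}) = (1 + \<eta> v) * prod \<tau> ({y\<in>\<Omega>. le y v} - {v})"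
proof -
  define U where "U = {y\<in>\<Omega>. le y u}"
  define V where "V = {y\<in>\<Omega>. le y v}"
  define Au where "Au = insert u (\<Omega> - (U \<union> V))"
  define Av where "Av = insert v (\<Omega> - (U \<union> V))"
  have uU: "u \<in> U" using po_refl[OF po u] u U_def by simp
  have vV: "v \<in> V" using po_refl[OF po v] v V_def by simp
  have uV: "u \<notin> V" using nuv V_def by simp
  have vU: "v \<notin> U" using nvu U_def by simp
  have UV: "U \<noteq> V" using uU uV by blast
  have upAu: "Au \<in> up_sets le \<Omega>"
    unfolding up_sets_def
  proof (intro CollectI conjI ballI impI)
    show "Au \<subseteq> \<Omega>" using u Au_def by auto
    fix a b assume a: "a \<in> Au" and b: "b \<in> \<Omega>" and ab: "le a b"
    show "b \<in> Au"
    proof (rule ccontr)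
      assume nb: "b \<notin> Au"
      then have bUV: "b \<in> U \<union> V" "b \<noteq> u" using b Au_def by auto
      show False
      proof (cases "a = u")
        case True
        show False
        proof (cases "b \<in> U")
          case True
          then show False using po_antisym[OF po, of b u] u \<open>a = u\<close> ab bUV(2) U_def by auto
        next
          case False
          then have "le b v" using bUV V_def by auto
          then show False using po_trans[OF po, of u b v] u v \<open>a = u\<close> ab nuv b by auto
        qed
      next
        case False
        then have a1: "a \<in> \<Omega>" "a \<notin> U \<union> V" using a Au_def by auto
        show False
        proof (cases "b \<in> U")
          case True
          then show False using po_trans[OF po, of a b u] a1 ab b u U_def by auto
        next
          case False
          then show False using po_trans[OF po, of a b v] a1 ab b v V_def bUV by auto
        qed
      qed
    qed
  qed
  have upAv: "Av \<in> up_sets le \<Omega>"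
    unfolding up_sets_def
  proof (intro CollectI conjI ballI impI)
    show "Av \<subseteq> \<Omega>" using v Av_def by auto
    fix a b assume a: "a \<in> Av" and b: "b \<in> \<Omega>" and ab: "le a b"
    show "b \<in> Av"
    proof (rule ccontr)
      assume nb: "b \<notin> Av"
      then have bUV: "b \<in> U \<union> V" "b \<noteq> v" using b Av_def by auto
      show False
      proof (cases "a = v")
        case True
        show False
        proof (cases "b \<in> V")
          case True
          then show False using po_antisym[OF po, of b v] v \<open>a = v\<close> ab bUV(2) V_def by auto
        next
          case False
          then have "le b u" using bUV U_def by auto
          then show False using po_trans[OF po, of v b u] u v \<open>a = v\<close> ab nvu b by auto
        qed
      next
        case False
        then have a1: "a \<in> \<Omega>" "a \<notin> U \<union> V" using a Av_def by auto
        show False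
        proof (cases "b \<in> U")
          case True
          then show False using po_trans[OF po, of a b u] a1 ab b u U_def by auto
        next
          case False
          then show False using po_trans[OF po, of a b v] a1 ab b v V_def bUV by auto
        qed
      qed
    qed
  qed
  have "card Au = card Av"
    unfolding Au_def Av_def using fin uU vV by (simp add: card_insert_disjoint)
  then have eqp: "pi_poly le \<tau> \<eta> \<Omega> Au = pi_poly le \<tau> \<eta> \<Omega> Av" using P1 upAu upAv by blast
  define k where "k = card U"
  define S where "S = {I\<in>down_sets le \<Omega>. card I = k}"
  define R where "R = {I\<in>S. u \<notin> I \<and> v \<notin> I}"
  have ceq: "(\<Sum>I\<in>S. phi le \<tau> \<eta> Au I) = (\<Sum>I\<in>S. phi le \<tau> \<eta> Av I)"
    using coeff_pi[OF fin, of le \<tau> \<eta> Au k] coeff_pi[OF fin, of le \<tau> \<eta> Av k] eqp S_def by metis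
  have finS: "finite S" using finite_down_sets[OF fin] S_def by auto
  have finR: "finite R" using finS R_def by auto
  have Rsame: "(\<Sum>I\<in>R. phi le \<tau> \<eta> Au I) = (\<Sum>I\<in>R. phi le \<tau> \<eta> Av I)"
  proof (rule sum.cong[OF refl])
    fix I assume "I \<in> R"
    then have nI: "u \<notin> I" "v \<notin> I" using R_def by auto
    have e1: "I \<inter> Au = I \<inter> Av" using nI Au_def Av_def by auto
    have "maxs le I \<subseteq> I" unfolding maxs_def by auto
    then have e2: "maxs le I - Au = maxs le I - Av" using nI Au_def Av_def by auto
    show "phi le \<tau> \<eta> Au I = phi le \<tau> \<eta> Av I" unfolding phi_def e1 e2 by (rule refl)
  qed
  have finU: "finite U" using fin U_def by auto
  have US: "U \<in> S" using dn_down[OF po u] S_def k_def U_def by auto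
  have VD: "V \<in> down_sets le \<Omega>" using dn_down[OF po v] V_def by auto
  have finI: "finite I" if "I \<in> S" for I
  proof -
    have "I \<subseteq> \<Omega>" using that unfolding S_def down_sets_def by blast
    then show ?thesis using fin by (rule finite_subset)
  qed
  have inS_u: "I = U" if "I \<in> S" "u \<in> I" for I
  proof -
    have sub: "U \<subseteq> I" using dn_sub[of I le \<Omega> u] that unfolding S_def U_def by blast
    have "card U = card I" using that unfolding S_def k_def by simp
    then show ?thesis using card_subset_eq[OF finI[OF that(1)] sub] by simp
  qed
  have inS_v: "I = V \<and> card V = k" if "I \<in> S" "v \<in> I" for I
  proof -
    have sub: "V \<subseteq> I" using dn_sub[of I le \<Omega> v] that unfolding S_def V_def by blast
    have "card V \<le> card I" using card_mono[OF finI[OF that(1)] sub] .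
    moreover have "card I = k" using that unfolding S_def by simp
    ultimately have cV: "card V = k" using cle unfolding k_def U_def V_def by simp
    then have "V = I" using card_subset_eq[OF finI[OF that(1)] sub] \<open>card I = k\<close> by simp
    then show ?thesis using cV by simp
  qed
  define tU where "tU = prod \<tau> (U - {u})"
  define tV where "tV = prod \<tau> (V - {v})"
  have pAuU: "phi le \<tau> \<eta> Au U = - tU"
    unfolding U_def tU_def by (rule phi_dn_in[OF po u]) (use uU uV in \<open>auto simp: Au_def U_def\<close>)
  have pAvU: "phi le \<tau> \<eta> Av U = tU * \<eta> u"
    unfolding U_def tU_def by (rule phi_dn_out[OF po u]) (use vU in \<open>auto simp: Av_def U_def\<close>)
  have pAuV: "phi le \<tau> \<eta> Au V = tV * \<eta> v"
    unfolding V_def tV_def by (rule phi_dn_out[OF po v]) (use uV in \<open>auto simp: Au_def V_def\<close>)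
  have pAvV: "phi le \<tau> \<eta> Av V = - tV"
    unfolding V_def tV_def by (rule phi_dn_in[OF po v]) (use vV vU in \<open>auto simp: Av_def V_def\<close>)
  have tU0: "tU \<noteq> 0" unfolding tU_def using tau finU U_def by (auto simp: prod_zero_iff)
  have eu: "1 + \<eta> u \<noteq> 0" using eta u one_plus_ne by blast
  show ?thesis
  proof (cases "card V = k")
    case False
    have "S = insert U R" using inS_u inS_v US False R_def S_def by blast
    moreover have "U \<notin> R" using uU R_def by auto
    ultimately have "phi le \<tau> \<eta> Au U = phi le \<tau> \<eta> Av U"
      using ceq Rsame finR by (simp add: sum.insert)
    then have "- tU = tU * \<eta> u" using pAuU pAvU by simp
    then have "tU * (1 + \<eta> u) = 0" by algebra
    then show ?thesis using tU0 eu by simp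
  next
    case True
    have "S = insert U (insert V R)" using inS_u inS_v US VD True R_def S_def by blast
    moreover have "U \<notin> R" "V \<notin> R" "U \<notin> insert V R" using uU vV UV R_def by auto
    ultimately have "phi le \<tau> \<eta> Au U + phi le \<tau> \<eta> Au V = phi le \<tau> \<eta> Av U + phi le \<tau> \<eta> Av V"
      using ceq Rsame finR by (simp add: sum.insert add.assoc)
    then have "- tU + tV * \<eta> v = tU * \<eta> u + - tV" using pAuU pAvU pAuV pAvV by simp
    then have "(1 + \<eta> u) * tU = (1 + \<eta> v) * tV" by algebra
    then show ?thesis using True k_def U_def V_def tU_def tV_def by simp
  qed
qed



lemma len_set_finite:
  "finite \<Omega> \<Longrightarrow> finite {card C | C. C \<subseteq> \<Omega> \<and> chain_on le C \<and> y \<in> C \<and> (\<forall>c\<in>C. le c y)}"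
  by (rule finite_subset[of _ "card ` Pow \<Omega>"]) auto

lemma len_ge:
  assumes "finite \<Omega>" "C \<subseteq> \<Omega>" "chain_on le C" "y \<in> C" "\<forall>c\<in>C. le c y"
  shows "card C \<le> len \<Omega> le y"
  unfolding len_def by (rule Max_ge[OF len_set_finite[OF assms(1)]]) (use assms in auto)

lemma len_attained:
  assumes fin: "finite \<Omega>" and po: "poset_on \<Omega> le" and y: "y \<in> \<Omega>"
  shows "\<exists>C. C \<subseteq> \<Omega> \<and> chain_on le C \<and> y \<in> C \<and> (\<forall>c\<in>C. le c y) \<and> card C = len \<Omega> le y"
proof -
  have "chain_on le {y}" unfolding chain_on_def using po_refl[OF po y] by simp
  then have ne: "{card C | C. C \<subseteq> \<Omega> \<and> chain_on le C \<and> y \<in> C \<and> (\<forall>c\<in>C. le c y)} \<noteq> {}"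
    using y po_refl[OF po y] by auto
  have "len \<Omega> le y \<in> {card C | C. C \<subseteq> \<Omega> \<and> chain_on le C \<and> y \<in> C \<and> (\<forall>c\<in>C. le c y)}"
    unfolding len_def by (rule Max_in[OF len_set_finite[OF fin] ne])
  then show ?thesis by (auto simp: eq_commute)
qed

lemma len_less:
  assumes fin: "finite \<Omega>" and po: "poset_on \<Omega> le" and x: "x \<in> \<Omega>" and y: "y \<in> \<Omega>"
    and xy: "le x y" and ne: "x \<noteq> y"
  shows "len \<Omega> le x < len \<Omega> le y"
proof -
  obtain C where C: "C \<subseteq> \<Omega>" "chain_on le C" "x \<in> C" "\<forall>c\<in>C. le c x" "card C = len \<Omega> le x"
    using len_attained[OF fin po x] by blast
  have yC: "y \<notin> C"
  proof
    assume "y \<in> C"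
    then have "le y x" using C by blast
    then show False using po_antisym[OF po, of x y] x y xy ne by blast
  qed
  have cy: "\<forall>c\<in>C. le c y"
  proof
    fix c assume "c \<in> C"
    then have "c \<in> \<Omega>" "le c x" using C by auto
    then show "le c y" using po_trans[OF po, of c x y] x y xy by blast
  qed
  have ch: "chain_on le (insert y C)"
    using C(2) cy po_refl[OF po y] unfolding chain_on_def by blast
  have finC: "finite C" using C(1) fin by (rule finite_subset)
  have "card (insert y C) \<le> len \<Omega> le y"
    by (rule len_ge[OF fin]) (use C y ch cy po_refl[OF po y] in auto)
  then show ?thesis using yC finC C(5) by simp
qed

lemma hier_from_incomp:
  assumes fin: "finite \<Omega>" and po: "poset_on \<Omega> le"
    and H: "\<forall>u\<in>\<Omega>. \<forall>v\<in>\<Omega>. \<not> le u v \<and> \<not> le v u \<longrightarrow> card {y\<in>\<Omega>. le y u} = card {y\<in>\<Omega>. le y v}"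
  shows "hierarchical \<Omega> le"
  unfolding hierarchical_def
proof (intro ballI impI)
  fix u v assume u: "u \<in> \<Omega>" and v: "v \<in> \<Omega>" and lv: "len \<Omega> le u + 1 \<le> len \<Omega> le v"
  show "le u v"
  proof (rule ccontr)
    assume nuv: "\<not> le u v"
    have nvu: "\<not> le v u"
    proof
      assume "le v u"
      moreover have "v \<noteq> u" using nuv po_refl[OF po u] by blast
      ultimately have "len \<Omega> le v < len \<Omega> le u" using len_less[OF fin po v u] by blast
      then show False using lv by simp
    qed
    have cuv: "card {y\<in>\<Omega>. le y u} = card {y\<in>\<Omega>. le y v}" using H u v nuv nvu by blast
    have below: "le w u" if w: "w \<in> \<Omega>" "le w v" "w \<noteq> v" for w
    proof (rule ccontr)
      assume nwu: "\<not> le w u"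
      have nuw: "\<not> le u w"
      proof
        assume "le u w"
        then have "le u v" using po_trans[OF po, of u w v] u v w by blast
        then show False using nuv by blast
      qed
      have cw: "card {y\<in>\<Omega>. le y w} = card {y\<in>\<Omega>. le y v}" using H w u nwu nuw cuv by metis
      have sub: "{y\<in>\<Omega>. le y w} \<subseteq> {y\<in>\<Omega>. le y v}"
        using po_trans[OF po, of _ w v] w v by blast
      have "v \<notin> {y\<in>\<Omega>. le y w}" using po_antisym[OF po, of v w] w v by blast
      moreover have "v \<in> {y\<in>\<Omega>. le y v}" using v po_refl[OF po v] by blast
      ultimately have "{y\<in>\<Omega>. le y w} \<subset> {y\<in>\<Omega>. le y v}" using sub by blast
      moreover have "finite {y\<in>\<Omega>. le y v}" using fin by simp
      ultimately have "card {y\<in>\<Omega>. le y w} < card {y\<in>\<Omega>. le y v}" by (rule psubset_card_mono[rotated])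
      then show False using cw by simp
    qed
    obtain C where C: "C \<subseteq> \<Omega>" "chain_on le C" "v \<in> C" "\<forall>c\<in>C. le c v" "card C = len \<Omega> le v"
      using len_attained[OF fin po v] by blast
    define C' where "C' = insert u (C - {v})"
    have uC: "u \<notin> C" using C nuv by blast
    have cu: "\<forall>c\<in>C - {v}. le c u" using below C by blast
    have ch: "chain_on le C'"
      using C(2) cu po_refl[OF po u] unfolding chain_on_def C'_def by blast
    have finC: "finite C" using C(1) fin by (rule finite_subset)
    have "card C' \<le> len \<Omega> le u"
      by (rule len_ge[OF fin]) (use C u ch cu po_refl[OF po u] in \<open>auto simp: C'_def\<close>)
    moreover have "card C' = card C"
    proof -
      have "card C' = Suc (card (C - {v}))" using uC finC by (simp add: C'_def)
      also have "\<dots> = card C" by (rule card_Suc_Diff1[OF finC C(3)])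
      finally show ?thesis .
    qed
    ultimately show False using C(5) lv by simp
  qed
qed



lemma P1_P3:
  assumes fin: "finite \<Omega>" and po: "poset_on \<Omega> le"
    and tau: "\<forall>i\<in>\<Omega>. \<tau> i \<noteq> 0" and eta: "\<forall>i\<in>\<Omega>. \<eta> i \<noteq> -1"
    and P1: "\<forall>C\<in>up_sets le \<Omega>. \<forall>D\<in>up_sets le \<Omega>. card C = card D \<longrightarrow> pi_poly le \<tau> \<eta> \<Omega> C = pi_poly le \<tau> \<eta> \<Omega> D"
  shows "hierarchical \<Omega> le \<and> (\<forall>u\<in>\<Omega>. \<forall>v\<in>\<Omega>. len \<Omega> le u = len \<Omega> le v \<longrightarrow> \<eta> u = \<eta> v)"
proof -
  have inc: "card {y\<in>\<Omega>. le y u} = card {y\<in>\<Omega>. le y v} \<and>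
    (1 + \<eta> u) * prod \<tau> ({y\<in>\<Omega>. le y u} - {u}) = (1 + \<eta> v) * prod \<tau> ({y\<in>\<Omega>. le y v} - {v})"
    if uv: "u \<in> \<Omega>" "v \<in> \<Omega>" "\<not> le u v" "\<not> le v u" for u v
  proof (cases "card {y\<in>\<Omega>. le y u} \<le> card {y\<in>\<Omega>. le y v}")
    case True
    show ?thesis by (rule incomp_key[OF fin po tau eta P1 uv True])
  next
    case False
    then have c: "card {y\<in>\<Omega>. le y v} \<le> card {y\<in>\<Omega>. le y u}" by simp
    have "card {y\<in>\<Omega>. le y v} = card {y\<in>\<Omega>. le y u} \<and>
      (1 + \<eta> v) * prod \<tau> ({y\<in>\<Omega>. le y v} - {v}) = (1 + \<eta> u) * prod \<tau> ({y\<in>\<Omega>. le y u} - {u})"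
      by (rule incomp_key[OF fin po tau eta P1 uv(2) uv(1) uv(4) uv(3) c])
    then show ?thesis by simp
  qed
  have hier: "hierarchical \<Omega> le"
    by (rule hier_from_incomp[OF fin po]) (use inc in blast)
  have "\<eta> u = \<eta> v" if u: "u \<in> \<Omega>" and v: "v \<in> \<Omega>" and l: "len \<Omega> le u = len \<Omega> le v" for u v
  proof (cases "u = v")
    case True then show ?thesis by simp
  next
    case False
    have nuv: "\<not> le u v" using len_less[OF fin po u v] l False by auto
    have nvu: "\<not> le v u" using len_less[OF fin po v u] l False by auto
    have lh: "le w x" if "w \<in> \<Omega>" "x \<in> \<Omega>" "len \<Omega> le w + 1 \<le> len \<Omega> le x" for w x
      using hier that unfolding hierarchical_def by blast
    have eqs: "{y\<in>\<Omega>. le y u} - {u} = {y\<in>\<Omega>. le y v} - {v}"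
    proof (intro equalityI subsetI)
      fix w assume w: "w \<in> {y\<in>\<Omega>. le y u} - {u}"
      then have "len \<Omega> le w < len \<Omega> le u" using len_less[OF fin po, of w u] u by auto
      then have "le w v" using lh[of w v] w v l by auto
      moreover have "w \<noteq> v" using w nvu by auto
      ultimately show "w \<in> {y\<in>\<Omega>. le y v} - {v}" using w by auto
    next
      fix w assume w: "w \<in> {y\<in>\<Omega>. le y v} - {v}"
      then have "len \<Omega> le w < len \<Omega> le v" using len_less[OF fin po, of w v] v by auto
      then have "le w u" using lh[of w u] w u l by auto
      moreover have "w \<noteq> u" using w nuv by auto
      ultimately show "w \<in> {y\<in>\<Omega>. le y u} - {u}" using w by auto
    qed
    have t0: "prod \<tau> ({y\<in>\<Omega>. le y u} - {u}) \<noteq> 0" using tau fin by (auto simp: prod_zero_iff)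
    have "(1 + \<eta> u) * prod \<tau> ({y\<in>\<Omega>. le y u} - {u}) = (1 + \<eta> v) * prod \<tau> ({y\<in>\<Omega>. le y u} - {u})"
      using inc[OF u v nuv nvu] eqs by simp
    then show ?thesis using t0 by simp
  qed
  then show ?thesis using hier by blast
qed



lemma prod_monom1:
  assumes "finite T"
  shows "(\<Prod>x\<in>T. monom (c x) 1) = monom (\<Prod>x\<in>T. c x) (card T)"
  using assms
proof (induction T rule: finite_induct)
  case empty
  then show ?case by (simp add: monom_0 one_pCons)
next
  case (insert x F)
  then show ?case by (simp add: mult_monom)
qed

lemma G_formula:
  fixes e :: "'k::field"
  assumes finL: "finite L" and DL: "D \<subseteq> L"
  shows "(\<Sum>T\<in>Pow L. monom ((-1)^card (T \<inter> D) * e^card (T - D)) (card T))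
         = [:1,-1:]^card D * [:1,e:]^(card L - card D)"
proof -
  define c where "c x = (if x \<in> D then -1 else e)" for x
  have pc: "(\<Prod>x\<in>T. c x) = (-1)^card (T \<inter> D) * e^card (T - D)" if "finite T" for T
  proof -
    have "(\<Prod>x\<in>T. c x) = (\<Prod>x\<in>T \<inter> D. c x) * (\<Prod>x\<in>T - D. c x)"
      using that by (rule prod.Int_Diff)
    also have "(\<Prod>x\<in>T \<inter> D. c x) = (\<Prod>x\<in>T \<inter> D. -1)" by (rule prod.cong) (auto simp: c_def)
    also have "(\<Prod>x\<in>T - D. c x) = (\<Prod>x\<in>T - D. e)" by (rule prod.cong) (auto simp: c_def)
    finally show ?thesis by simp
  qed
  have "(\<Prod>x\<in>L. monom (c x) 1 + 1) = (\<Sum>T\<in>Pow L. (\<Prod>x\<in>T. monom (c x) 1) * (\<Prod>x\<in>L-T. 1))"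
    by (rule prod_add[OF finL])
  also have "\<dots> = (\<Sum>T\<in>Pow L. monom ((-1)^card (T \<inter> D) * e^card (T - D)) (card T))"
  proof (rule sum.cong[OF refl])
    fix T assume "T \<in> Pow L"
    then have fT: "finite T" using finL by (auto intro: finite_subset)
    show "(\<Prod>x\<in>T. monom (c x) 1) * (\<Prod>x\<in>L-T. 1) = monom ((-1)^card (T \<inter> D) * e^card (T - D)) (card T)"
      using prod_monom1[OF fT, of c] pc[OF fT] by simp
  qed
  finally have eq1: "(\<Sum>T\<in>Pow L. monom ((-1)^card (T \<inter> D) * e^card (T - D)) (card T)) = (\<Prod>x\<in>L. monom (c x) 1 + 1)" ..
  have m1: "monom a 1 + 1 = [:1, a:]" for a :: 'k
    by (simp add: monom_Suc monom_0 one_pCons)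
  have m1': "monom a (Suc 0) + 1 = [:1, a:]" for a :: 'k
    using m1 by simp
  have "(\<Prod>x\<in>L. monom (c x) 1 + 1) = (\<Prod>x\<in>L \<inter> D. monom (c x) 1 + 1) * (\<Prod>x\<in>L - D. monom (c x) 1 + 1)"
    using finL by (rule prod.Int_Diff)
  also have "(\<Prod>x\<in>L \<inter> D. monom (c x) 1 + 1) = (\<Prod>x\<in>L \<inter> D. [:1,-1:])" by (rule prod.cong) (auto simp: c_def m1 m1')
  also have "(\<Prod>x\<in>L - D. monom (c x) 1 + 1) = (\<Prod>x\<in>L - D. [:1,e:])" by (rule prod.cong) (auto simp: c_def m1 m1')
  finally have "(\<Prod>x\<in>L. monom (c x) 1 + 1) = [:1,-1:]^card (L \<inter> D) * [:1,e:]^card (L - D)" by simp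
  moreover have "L \<inter> D = D" using DL by blast
  moreover have "card (L - D) = card L - card D" using DL finL by (simp add: card_Diff_subset finite_subset)
  ultimately show ?thesis using eq1 by simp
qed

lemma G_inj_aux:
  fixes e :: "'k::field"
  assumes e: "e \<noteq> -1" and ss: "s < s'" and s'n: "s' \<le> n"
    and eq: "[:1,-1:]^s * [:1,e:]^(n - s) = [:1,-1:]^s' * [:1,e:]^(n - s')"
  shows False
proof -
  define k where "k = s' - s"
  define r where "r = n - s'"
  have k0: "k > 0" using ss k_def by simp
  have ns: "n - s = r + k" and s': "s' = s + k" using ss s'n k_def r_def by auto
  define p :: "'k poly" where "p = [:1,-1:]"
  define q :: "'k poly" where "q = [:1,e:]"
  have eq': "p^s * q^(n - s) = p^s' * q^(n - s')" using eq unfolding p_def q_def .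
  have e1: "p^s * q^(n - s) = (p^s * q^r) * q^k" unfolding ns by (simp add: power_add algebra_simps)
  have e2: "p^s' * q^(n - s') = (p^s * q^r) * p^k"
  proof -
    have "p^s' * q^(n - s') = p^(s + k) * q^r" using s' r_def by simp
    also have "\<dots> = (p^s * q^r) * p^k" by (simp add: power_add algebra_simps)
    finally show ?thesis .
  qed
  have "(p^s * q^r) * q^k = (p^s * q^r) * p^k" using eq' e1 e2 by simp
  moreover have "p^s * q^r \<noteq> 0" unfolding p_def q_def by simp
  ultimately have "q^k = p^k" using mult_left_cancel by blast
  then have "poly (q^k) 1 = poly (p^k) 1" by simp
  then have "(1 + e)^k = 0" using k0 unfolding p_def q_def by simp
  then have "1 + e = 0" by simp
  then show False using e by (metis add.commute add_eq_0_iff)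
qed

lemma G_inj:
  fixes e :: "'k::field"
  assumes e: "e \<noteq> -1" and "s \<le> n" "s' \<le> n"
  shows "([:1,-1:]^s * [:1,e:]^(n - s) = [:1,-1:]^s' * [:1,e:]^(n - s')) \<longleftrightarrow> s = s'"
proof
  assume eq: "[:1,-1:]^s * [:1,e:]^(n - s) = [:1,-1:]^s' * [:1,e:]^(n - s')"
  show "s = s'"
  proof (rule linorder_cases[of s s'])
    assume "s < s'" then show ?thesis using G_inj_aux[OF e _ assms(3) eq] by blast
  next
    assume "s' < s" then show ?thesis using G_inj_aux[OF e _ assms(2) eq[symmetric]] by blast
  qed
qed simp



lemma A_main:
  fixes f :: "'a \<Rightarrow> nat" and \<tau> \<eta> :: "'a \<Rightarrow> 'k::field"
  assumes "finite \<Omega>" and "\<forall>x\<in>\<Omega>. \<forall>y\<in>\<Omega>. le x y \<longleftrightarrow> (x = y \<or> f x < f y)"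
    and "\<forall>x\<in>\<Omega>. \<forall>y\<in>\<Omega>. f x = f y \<longrightarrow> \<eta> x = \<eta> y" and "\<forall>i\<in>\<Omega>. \<tau> i \<noteq> 0" and "\<forall>i\<in>\<Omega>. \<eta> i \<noteq> -1"
  shows "\<forall>C\<in>up_sets le \<Omega>. \<forall>D\<in>up_sets le \<Omega>.
           pi_poly le \<tau> \<eta> \<Omega> C = pi_poly le \<tau> \<eta> \<Omega> D \<longleftrightarrow> card C = card D"
  using assms
proof (induction "card \<Omega>" arbitrary: \<Omega> rule: less_induct)
  case less
  note fin = less.prems(1) and ord = less.prems(2) and etaf = less.prems(3)
    and tau = less.prems(4) and eta = less.prems(5)
  show ?case
  proof (cases "\<Omega> = {}")
    case True
    then have "up_sets le \<Omega> = {{}}" unfolding up_sets_def by auto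
    then show ?thesis by simp
  next
    case False
    define h where "h = Max (f ` \<Omega>)"
    define L where "L = {x\<in>\<Omega>. f x = h}"
    define \<Omega>' where "\<Omega>' = \<Omega> - L"
    have fle: "f x \<le> h" if "x \<in> \<Omega>" for x using fin that h_def by simp
    have "h \<in> f ` \<Omega>" unfolding h_def using fin False by simp
    then obtain l0 where l0: "l0 \<in> L" unfolding L_def by auto
    have ordI: "le x y \<longleftrightarrow> (x = y \<or> f x < f y)" if "x \<in> \<Omega>" "y \<in> \<Omega>" for x y
      using ord that by blast
    have ltL: "f x < h" if "x \<in> \<Omega>'" for x
    proof -
      have "x \<in> \<Omega>" "f x \<noteq> h" using that unfolding \<Omega>'_def L_def by auto
      then show ?thesis using fle[of x] by simp
    qed
    have finL: "finite L" using fin L_def by simp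
    have fin': "finite \<Omega>'" using fin \<Omega>'_def by simp
    have LO: "L \<subseteq> \<Omega>" using L_def by auto
    have O'O: "\<Omega>' \<subseteq> \<Omega>" using \<Omega>'_def by auto
    have dis: "\<Omega>' \<inter> L = {}" using \<Omega>'_def by auto
    have OU: "\<Omega> = \<Omega>' \<union> L" using \<Omega>'_def LO by auto
    have ccard: "card \<Omega>' < card \<Omega>"
    proof -
      have "\<Omega>' \<subset> \<Omega>" using l0 LO unfolding \<Omega>'_def by auto
      then show ?thesis by (rule psubset_card_mono[OF fin])
    qed
    define e where "e = \<eta> l0"
    have etaL: "\<eta> x = e" if "x \<in> L" for x using etaf that l0 LO unfolding e_def L_def by auto
    have IH: "\<forall>C\<in>up_sets le \<Omega>'. \<forall>D\<in>up_sets le \<Omega>'.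
           pi_poly le \<tau> \<eta> \<Omega>' C = pi_poly le \<tau> \<eta> \<Omega>' D \<longleftrightarrow> card C = card D"
      by (rule less.hyps[OF ccard fin']) (use ord etaf tau eta O'O in blast)+
    have Lmax: "y = x" if "x \<in> L" "y \<in> \<Omega>" "le x y" for x y
    proof -
      have "x \<in> \<Omega>" "f x = h" using that unfolding L_def by auto
      then have "x = y \<or> h < f y" using ordI[of x y] that by simp
      then show ?thesis using fle[OF that(2)] by auto
    qed
    have belowL: "le x y" if "x \<in> \<Omega>'" "y \<in> L" for x y
    proof -
      have "y \<in> \<Omega>" "f y = h" using that unfolding L_def by auto
      moreover have "x \<in> \<Omega>" using that O'O by auto
      ultimately show ?thesis using ordI[of x y] ltL[OF that(1)] by simp
    qed
    have DS: "down_sets le \<Omega> = down_sets le \<Omega>' \<union> (\<lambda>T. \<Omega>' \<union> T) ` (Pow L - {{}})"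
    proof (intro equalityI subsetI)
      fix I assume I: "I \<in> down_sets le \<Omega>"
      then have IO: "I \<subseteq> \<Omega>" and Icl: "\<forall>a\<in>I. \<forall>b\<in>\<Omega>. le b a \<longrightarrow> b \<in> I" unfolding down_sets_def by auto
      show "I \<in> down_sets le \<Omega>' \<union> (\<lambda>T. \<Omega>' \<union> T) ` (Pow L - {{}})"
      proof (cases "I \<inter> L = {}")
        case True
        then have "I \<subseteq> \<Omega>'" using IO \<Omega>'_def by auto
        then have "I \<in> down_sets le \<Omega>'" unfolding down_sets_def using Icl O'O by auto
        then show ?thesis by blast
      next
        case False
        then obtain l where l: "l \<in> I" "l \<in> L" by auto
        have "\<Omega>' \<subseteq> I" using Icl l belowL O'O by blast
        then have "I = \<Omega>' \<union> (I \<inter> L)" using IO OU by auto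
        moreover have "I \<inter> L \<in> Pow L - {{}}" using False by auto
        ultimately show ?thesis by blast
      qed
    next
      fix I assume I: "I \<in> down_sets le \<Omega>' \<union> (\<lambda>T. \<Omega>' \<union> T) ` (Pow L - {{}})"
      show "I \<in> down_sets le \<Omega>"
      proof (cases "I \<in> down_sets le \<Omega>'")
        case True
        then have IO: "I \<subseteq> \<Omega>'" and Icl: "\<forall>a\<in>I. \<forall>b\<in>\<Omega>'. le b a \<longrightarrow> b \<in> I" unfolding down_sets_def by auto
        have "b \<in> I" if "a \<in> I" "b \<in> \<Omega>" "le b a" for a b
        proof -
          have "a \<in> \<Omega>'" "a \<in> \<Omega>" using that IO O'O by auto
          then have "b = a \<or> f b < f a" using ordI[of b a] that by simp
          then have "b \<in> \<Omega>'" using ltL[OF \<open>a \<in> \<Omega>'\<close>] that \<open>a \<in> \<Omega>'\<close> unfolding \<Omega>'_def L_def by auto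
          then show ?thesis using Icl that by blast
        qed
        then show ?thesis unfolding down_sets_def using IO O'O by auto
      next
        case False
        then obtain T where T: "T \<subseteq> L" "I = \<Omega>' \<union> T" using I by auto
        have "b \<in> I" if "a \<in> I" "b \<in> \<Omega>" "le b a" for a b
        proof -
          have "a \<in> \<Omega>" using that T LO O'O by auto
          then have "b = a \<or> f b < f a" using ordI[of b a] that by simp
          then have "b = a \<or> b \<in> \<Omega>'" using fle[OF \<open>a \<in> \<Omega>\<close>] that unfolding \<Omega>'_def L_def by auto
          then show ?thesis using that T by auto
        qed
        then show ?thesis unfolding down_sets_def using T LO O'O by auto
      qed
    qed
    have disj: "down_sets le \<Omega>' \<inter> (\<lambda>T. \<Omega>' \<union> T) ` (Pow L - {{}}) = {}"
      unfolding down_sets_def using dis by blast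
    have inj: "inj_on (\<lambda>T. \<Omega>' \<union> T) (Pow L - {{}})"
    proof (rule inj_onI)
      fix S T assume "S \<in> Pow L - {{}}" "T \<in> Pow L - {{}}" "\<Omega>' \<union> S = \<Omega>' \<union> T"
      then show "S = T" using dis by blast
    qed
    have phi_low: "phi le \<tau> \<eta> D I = phi le \<tau> \<eta> (D - L) I" if "I \<in> down_sets le \<Omega>'" for D I
    proof -
      have "I \<subseteq> \<Omega>'" using that unfolding down_sets_def by auto
      then have e1: "I \<inter> D = I \<inter> (D - L)" using dis by blast
      have "maxs le I \<subseteq> I" unfolding maxs_def by auto
      then have e2: "maxs le I - D = maxs le I - (D - L)" using \<open>I \<subseteq> \<Omega>'\<close> dis by blast
      show ?thesis unfolding phi_def e1 e2 by (rule refl)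
    qed
    define m where "m = card \<Omega>'"
    have decomp: "pi_poly le \<tau> \<eta> \<Omega> D = pi_poly le \<tau> \<eta> \<Omega>' (D - L) +
       (\<Sum>T\<in>Pow L - {{}}. monom (phi le \<tau> \<eta> D (\<Omega>' \<union> T)) (m + card T))" for D
    proof -
      have f1: "finite (down_sets le \<Omega>')" by (rule finite_down_sets[OF fin'])
      have f2: "finite ((\<lambda>T. \<Omega>' \<union> T) ` (Pow L - {{}}))" using finL by simp
      have "pi_poly le \<tau> \<eta> \<Omega> D = (\<Sum>I\<in>down_sets le \<Omega>. monom (phi le \<tau> \<eta> D I) (card I))"
        by (simp only: pi_poly_def)
      also have "\<dots> = (\<Sum>I\<in>down_sets le \<Omega>' \<union> (\<lambda>T. \<Omega>' \<union> T) ` (Pow L - {{}}). monom (phi le \<tau> \<eta> D I) (card I))"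
        by (rule sum.cong[OF DS refl])
      also have "\<dots> = (\<Sum>I\<in>down_sets le \<Omega>'. monom (phi le \<tau> \<eta> D I) (card I))
          + (\<Sum>I\<in>(\<lambda>T. \<Omega>' \<union> T) ` (Pow L - {{}}). monom (phi le \<tau> \<eta> D I) (card I))"
        by (rule sum.union_disjoint[OF f1 f2 disj])
      also have "(\<Sum>I\<in>down_sets le \<Omega>'. monom (phi le \<tau> \<eta> D I) (card I)) = pi_poly le \<tau> \<eta> \<Omega>' (D - L)"
        unfolding pi_poly_def
      proof (rule sum.cong[OF refl])
        fix I assume "I \<in> down_sets le \<Omega>'"
        then have "phi le \<tau> \<eta> D I = phi le \<tau> \<eta> (D - L) I" by (rule phi_low)
        then show "monom (phi le \<tau> \<eta> D I) (card I) = monom (phi le \<tau> \<eta> (D - L) I) (card I)" by (rule arg_cong)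
      qed
      also have "(\<Sum>I\<in>(\<lambda>T. \<Omega>' \<union> T) ` (Pow L - {{}}). monom (phi le \<tau> \<eta> D I) (card I))
          = (\<Sum>T\<in>Pow L - {{}}. monom (phi le \<tau> \<eta> D (\<Omega>' \<union> T)) (card (\<Omega>' \<union> T)))"
        by (rule sum.reindex[OF inj, unfolded comp_def])
      also have "\<dots> = (\<Sum>T\<in>Pow L - {{}}. monom (phi le \<tau> \<eta> D (\<Omega>' \<union> T)) (m + card T))"
      proof (rule sum.cong[OF refl])
        fix T assume "T \<in> Pow L - {{}}"
        then have "T \<subseteq> L" by auto
        then have "card (\<Omega>' \<union> T) = m + card T"
          unfolding m_def using fin' finL dis by (subst card_Un_disjoint) (auto intro: finite_subset)
        then show "monom (phi le \<tau> \<eta> D (\<Omega>' \<union> T)) (card (\<Omega>' \<union> T)) = monom (phi le \<tau> \<eta> D (\<Omega>' \<union> T)) (m + card T)"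
          by simp
      qed
      finally show ?thesis .
    qed
    define t' where "t' = prod \<tau> \<Omega>'"
    have t'0: "t' \<noteq> 0" unfolding t'_def using tau O'O fin' by (auto simp: prod_zero_iff)
    have maxsT: "maxs le (\<Omega>' \<union> T) = T" if TL: "T \<subseteq> L" "T \<noteq> {}" for T
    proof (intro equalityI subsetI)
      fix y assume y: "y \<in> maxs le (\<Omega>' \<union> T)"
      then have y1: "y \<in> \<Omega>' \<union> T" and y2: "\<forall>z\<in>\<Omega>' \<union> T. le y z \<longrightarrow> z = y" unfolding maxs_def by auto
      show "y \<in> T"
      proof (rule ccontr)
        assume "y \<notin> T"
        then have "y \<in> \<Omega>'" using y1 by auto
        obtain t where t: "t \<in> T" using TL by auto
        then have "le y t" using belowL \<open>y \<in> \<Omega>'\<close> TL by auto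
        then have "t = y" using y2 t by auto
        then show False using t \<open>y \<in> \<Omega>'\<close> TL dis by auto
      qed
    next
      fix y assume y: "y \<in> T"
      have "z = y" if "z \<in> \<Omega>' \<union> T" "le y z" for z
        using Lmax[of y z] y that \<open>T \<subseteq> L\<close> O'O LO by auto
      then show "y \<in> maxs le (\<Omega>' \<union> T)" unfolding maxs_def using y by auto
    qed
    have phiT: "phi le \<tau> \<eta> D (\<Omega>' \<union> T) =
        (if D \<inter> \<Omega>' = {} then (-1)^card (T \<inter> D) * t' * e^card (T - D) else 0)"
      if T: "T \<subseteq> L" "T \<noteq> {}" for D T
    proof -
      have mx: "maxs le (\<Omega>' \<union> T) = T" by (rule maxsT[OF T])
      have d1: "\<Omega>' \<union> T - T = \<Omega>'" using T dis by auto
      have c: "((\<Omega>' \<union> T) \<inter> D \<subseteq> T) = (D \<inter> \<Omega>' = {})" using T dis by auto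
      show ?thesis
      proof (cases "D \<inter> \<Omega>' = {}")
        case True
        have i: "(\<Omega>' \<union> T) \<inter> D = T \<inter> D" using True by auto
        have pe: "prod \<eta> (T - D) = e^card (T - D)"
          using etaL T by (subst prod.cong[OF refl, of _ _ "\<lambda>_. e"]) auto
        show ?thesis unfolding phi_def mx d1 c i pe t'_def using True by simp
      next
        case False
        then show ?thesis unfolding phi_def mx c by simp
      qed
    qed
    define G where "G S = [:1,-1:]^card S * [:1,e:]^(card L - card S)" for S :: "'a set"
    define M where "M = monom t' m"
    have M0: "M \<noteq> 0" unfolding M_def using t'0 by simp
    have F1: "pi_poly le \<tau> \<eta> \<Omega> D = pi_poly le \<tau> \<eta> \<Omega>' {} + M * (G D - 1)" if DL: "D \<subseteq> L" for D
    proof -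
      have DO: "D \<inter> \<Omega>' = {}" using DL dis by auto
      have DL': "D - L = {}" using DL by auto
      define g where "g T = monom ((-1)^card (T \<inter> D) * e^card (T - D)) (card T)" for T
      have "(\<Sum>T\<in>Pow L - {{}}. monom (phi le \<tau> \<eta> D (\<Omega>' \<union> T)) (m + card T)) = (\<Sum>T\<in>Pow L - {{}}. M * g T)"
      proof (rule sum.cong[OF refl])
        fix T assume "T \<in> Pow L - {{}}"
        then have T: "T \<subseteq> L" "T \<noteq> {}" by auto
        show "monom (phi le \<tau> \<eta> D (\<Omega>' \<union> T)) (m + card T) = M * g T"
          unfolding phiT[OF T] M_def g_def using DO by (simp add: mult_monom algebra_simps)
      qed
      also have "\<dots> = M * (\<Sum>T\<in>Pow L - {{}}. g T)" by (simp add: sum_distrib_left)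
      also have "(\<Sum>T\<in>Pow L - {{}}. g T) = (\<Sum>T\<in>Pow L. g T) - g {}"
        using finL by (simp add: sum_diff1)
      also have "g {} = 1" unfolding g_def by (simp add: monom_0 one_pCons)
      also have "(\<Sum>T\<in>Pow L. g T) = G D" unfolding g_def G_def by (rule G_formula[OF finL DL])
      finally show ?thesis using decomp[of D] DL' by simp
    qed
    have upcase: "D \<subseteq> L \<or> (L \<subseteq> D \<and> D - L \<noteq> {})" if D: "D \<in> up_sets le \<Omega>" for D
    proof (cases "D \<subseteq> L")
      case False
      then obtain x where x: "x \<in> D" "x \<notin> L" by auto
      have DO: "D \<subseteq> \<Omega>" and Dcl: "\<forall>a\<in>D. \<forall>b\<in>\<Omega>. le a b \<longrightarrow> b \<in> D" using D unfolding up_sets_def by auto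
      have "x \<in> \<Omega>'" using x DO \<Omega>'_def by auto
      then have "L \<subseteq> D" using Dcl belowL x LO by blast
      then show ?thesis using x by auto
    qed simp
    have upres: "D - L \<in> up_sets le \<Omega>'" if D: "D \<in> up_sets le \<Omega>" for D
      using D O'O unfolding up_sets_def \<Omega>'_def by blast
    have F2: "pi_poly le \<tau> \<eta> \<Omega> D = pi_poly le \<tau> \<eta> \<Omega>' (D - L)" if D: "D \<in> up_sets le \<Omega>" "\<not> D \<subseteq> L" for D
    proof -
      have "D \<inter> \<Omega>' \<noteq> {}" using D unfolding up_sets_def \<Omega>'_def by auto
      then have "(\<Sum>T\<in>Pow L - {{}}. monom (phi le \<tau> \<eta> D (\<Omega>' \<union> T)) (m + card T)) = 0"
        by (intro sum.neutral) (auto simp: phiT)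
      then show ?thesis using decomp[of D] by simp
    qed
    have deg: "coeff (pi_poly le \<tau> \<eta> \<Omega>' X) (m + j) = 0" if "j > 0" for X j
    proof -
      have E: "{I\<in>down_sets le \<Omega>'. card I = m + j} = {}"
      proof -
        have "card I \<le> m" if "I \<in> down_sets le \<Omega>'" for I
          using that fin' unfolding down_sets_def m_def by (auto intro: card_mono)
        then show ?thesis using \<open>j > 0\<close> by fastforce
      qed
      show ?thesis unfolding coeff_pi[OF fin'] E by simp
    qed
    have emp': "{} \<in> up_sets le \<Omega>'" unfolding up_sets_def by auto
    have mixed: "pi_poly le \<tau> \<eta> \<Omega> S \<noteq> pi_poly le \<tau> \<eta> \<Omega> D"
      if S: "S \<in> up_sets le \<Omega>" "S \<subseteq> L" and D: "D \<in> up_sets le \<Omega>" "\<not> D \<subseteq> L" for S D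
    proof
      assume "pi_poly le \<tau> \<eta> \<Omega> S = pi_poly le \<tau> \<eta> \<Omega> D"
      then have eq: "pi_poly le \<tau> \<eta> \<Omega>' {} + M * (G S - 1) = pi_poly le \<tau> \<eta> \<Omega>' (D - L)"
        using F1[OF S(2)] F2[OF D] by simp
      have "coeff (G S - 1) j = 0" for j
      proof (cases "j = 0")
        case True
        have "coeff (G S) 0 = 1" unfolding G_def by (simp add: poly_0_coeff_0[symmetric])
        then show ?thesis using True by simp
      next
        case False
        have "coeff (M * (G S - 1)) (m + j) = coeff (pi_poly le \<tau> \<eta> \<Omega>' (D - L)) (m + j) - coeff (pi_poly le \<tau> \<eta> \<Omega>' {}) (m + j)"
          using eq by (metis add_diff_cancel_left' coeff_diff)
        also have "\<dots> = 0" using deg False by simp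
        finally have "t' * coeff (G S - 1) j = 0" unfolding M_def by (simp add: coeff_monom_mult)
        then show ?thesis using t'0 by simp
      qed
      then have "G S - 1 = 0" by (intro poly_eqI) simp
      then have "pi_poly le \<tau> \<eta> \<Omega>' {} = pi_poly le \<tau> \<eta> \<Omega>' (D - L)" using eq by simp
      then have "card ({}::'a set) = card (D - L)" using IH emp' upres[OF D(1)] by blast
      moreover have "finite (D - L)" using D(1) fin unfolding up_sets_def by (auto intro: finite_subset)
      moreover have "D - L \<noteq> {}" using D(2) by auto
      ultimately show False by simp
    qed
    have cardL: "card L < card D" if D: "D \<in> up_sets le \<Omega>" "\<not> D \<subseteq> L" for D
    proof -
      have "L \<subset> D" using upcase[OF D(1)] D(2) by auto
      moreover have "finite D" using D(1) fin unfolding up_sets_def by (auto intro: finite_subset)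
      ultimately show ?thesis by (rule psubset_card_mono[rotated])
    qed
    show ?thesis
    proof (intro ballI)
      fix C D assume C: "C \<in> up_sets le \<Omega>" and D: "D \<in> up_sets le \<Omega>"
      show "pi_poly le \<tau> \<eta> \<Omega> C = pi_poly le \<tau> \<eta> \<Omega> D \<longleftrightarrow> card C = card D"
      proof (cases "C \<subseteq> L")
        case CL: True
        show ?thesis
        proof (cases "D \<subseteq> L")
          case DL: True
          have "pi_poly le \<tau> \<eta> \<Omega> C = pi_poly le \<tau> \<eta> \<Omega> D \<longleftrightarrow> M * (G C - 1) = M * (G D - 1)"
            using F1[OF CL] F1[OF DL] by simp
          also have "\<dots> \<longleftrightarrow> G C = G D" using M0 by simp
          also have "\<dots> \<longleftrightarrow> card C = card D" unfolding G_def
            by (rule G_inj) (use eta l0 LO etaL card_mono[OF finL CL] card_mono[OF finL DL] in auto)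
          finally show ?thesis .
        next
          case DL: False
          have "card C \<le> card L" using card_mono[OF finL CL] .
          then show ?thesis using mixed[OF C CL D DL] cardL[OF D DL] by simp
        qed
      next
        case CL: False
        show ?thesis
        proof (cases "D \<subseteq> L")
          case DL: True
          have "card D \<le> card L" using card_mono[OF finL DL] .
          then show ?thesis using mixed[OF D DL C CL] cardL[OF C CL] by auto
        next
          case DL: False
          have "pi_poly le \<tau> \<eta> \<Omega> C = pi_poly le \<tau> \<eta> \<Omega> D \<longleftrightarrow> card (C - L) = card (D - L)"
            using F2[OF C CL] F2[OF D DL] IH upres[OF C] upres[OF D] by simp
          moreover have "card (C - L) = card C - card L" "card (D - L) = card D - card L"
            using upcase[OF C] upcase[OF D] CL DL finL by (auto simp: card_Diff_subset)
          ultimately show ?thesis using cardL[OF C CL] cardL[OF D DL] by auto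
        qed
      qed
    qed
  qed
qed

theorem theorem3p3:
  fixes \<Omega> :: "'a set" and le :: "'a \<Rightarrow> 'a \<Rightarrow> bool"
    and \<tau> \<eta> :: "'a \<Rightarrow> 'k::field"
  assumes "finite \<Omega>" and "poset_on \<Omega> le"
    and "\<forall>i\<in>\<Omega>. \<tau> i \<noteq> 0" and "\<forall>i\<in>\<Omega>. \<eta> i \<noteq> -1"
  shows "((\<forall>C\<in>up_sets le \<Omega>. \<forall>D\<in>up_sets le \<Omega>.
             card C = card D \<longrightarrow> pi_poly le \<tau> \<eta> \<Omega> C = pi_poly le \<tau> \<eta> \<Omega> D)
          \<longleftrightarrow>
          (\<forall>C\<in>up_sets le \<Omega>. \<forall>D\<in>up_sets le \<Omega>.
             pi_poly le \<tau> \<eta> \<Omega> C = pi_poly le \<tau> \<eta> \<Omega> D \<longleftrightarrow> card C = card D))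
       \<and>
         ((\<forall>C\<in>up_sets le \<Omega>. \<forall>D\<in>up_sets le \<Omega>.
             pi_poly le \<tau> \<eta> \<Omega> C = pi_poly le \<tau> \<eta> \<Omega> D \<longleftrightarrow> card C = card D)
          \<longleftrightarrow>
          (hierarchical \<Omega> le \<and>
           (\<forall>u\<in>\<Omega>. \<forall>v\<in>\<Omega>. len \<Omega> le u = len \<Omega> le v \<longrightarrow> \<eta> u = \<eta> v)))"
proof -
  let ?P1 = "\<forall>C\<in>up_sets le \<Omega>. \<forall>D\<in>up_sets le \<Omega>.
             card C = card D \<longrightarrow> pi_poly le \<tau> \<eta> \<Omega> C = pi_poly le \<tau> \<eta> \<Omega> D"
  let ?P2 = "\<forall>C\<in>up_sets le \<Omega>. \<forall>D\<in>up_sets le \<Omega>.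
             pi_poly le \<tau> \<eta> \<Omega> C = pi_poly le \<tau> \<eta> \<Omega> D \<longleftrightarrow> card C = card D"
  let ?P3 = "hierarchical \<Omega> le \<and>
           (\<forall>u\<in>\<Omega>. \<forall>v\<in>\<Omega>. len \<Omega> le u = len \<Omega> le v \<longrightarrow> \<eta> u = \<eta> v)"
  note fin = assms(1) and po = assms(2) and tau = assms(3) and eta = assms(4)
  have p13: "?P1 \<Longrightarrow> ?P3" by (rule P1_P3[OF fin po tau eta])
  have p32: "?P2" if p3: "?P3"
  proof -
    have hier: "hierarchical \<Omega> le" using p3 by blast
    have ord: "\<forall>x\<in>\<Omega>. \<forall>y\<in>\<Omega>. le x y \<longleftrightarrow> (x = y \<or> len \<Omega> le x < len \<Omega> le y)"
    proof (intro ballI iffI)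
      fix x y assume x: "x \<in> \<Omega>" and y: "y \<in> \<Omega>"
      {
        assume "le x y"
        then show "x = y \<or> len \<Omega> le x < len \<Omega> le y" using len_less[OF fin po x y] by blast
      next
        assume "x = y \<or> len \<Omega> le x < len \<Omega> le y"
        then show "le x y"
        proof
          assume "x = y" then show ?thesis using po_refl[OF po x] by simp
        next
          assume "len \<Omega> le x < len \<Omega> le y"
          then show ?thesis using hier x y unfolding hierarchical_def by simp
        qed
      }
    qed
    have etaf: "\<forall>x\<in>\<Omega>. \<forall>y\<in>\<Omega>. len \<Omega> le x = len \<Omega> le y \<longrightarrow> \<eta> x = \<eta> y" using p3 by blast
    show ?thesis by (rule A_main[OF fin ord etaf tau eta])
  qed
  have p21: "?P2 \<Longrightarrow> ?P1" by blast
  show ?thesis using p13 p32 p21 by blast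
qed

end
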